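(* Let $X$ be a Banach space, $f:X\to\mathbb{R}\cup\{+\infty\}$ convex and lower semicontinuous, $\bar x\in[f\le0]$ and $q\in(0,1]$. The following conditions are equivalent: (i) there exist $\tau>0$ and a neighbourhood $U$ of $\bar x$ such that $\tau\, d(x,[f\le0])\le f_+^q(x)$ for all $x\in U$; (ii) $\liminf_{x\to\bar x,\ f(x)>0} f^{q-1}(x)\, d(0,\partial f(x))>0$; (iii) $\liminf_{x\to\bar x,\ f(x)>0} d(x,[f\le0])^{q-1}\, d(0,\partial f(x))^q>0$.
   Context: $[f\le0]=\{x: f(x)\le0\}$, $f_+(x)=\max\{f(x),0\}$; for $f(x)\ge0$, $f^q(x):=[f(x)]^q$, $f_+^q(x)=[f_+(x)]^q$. $d(x,A)=\inf_{a\in A}\|x-a\|$, $d(x,\emptyset)=+\infty$. $\partial f(x)$ is the subdifferential of convex analysis ($\emptyset$ if $f(x)=+\infty$); $d(0,\partial f(x))=\inf\{\|x^*\|:x^*\in\partial f(x)\}$ ($+\infty$ if empty). *)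

theory Defs
  imports "HOL-Analysis.Analysis"
begin

text \<open>Extended-valued functions X \<rightarrow> \<real> \<union> {+\<infinity>} are modelled as ereal-valued functions never taking -\<infinity>.\<close>

definition proper_ext :: "('a \<Rightarrow> ereal) \<Rightarrow> bool" where
  "proper_ext f \<longleftrightarrow> (\<forall>x. f x \<noteq> -\<infinity>)"

definition convex_ext :: "('a::real_vector \<Rightarrow> ereal) \<Rightarrow> bool" where
  "convex_ext f \<longleftrightarrow> (\<forall>x y t. 0 \<le> t \<and> t \<le> 1 \<longrightarrow>
      f (t *\<^sub>R x + (1 - t) *\<^sub>R y) \<le> ereal t * f x + ereal (1 - t) * f y)"

definition lsc_ext :: "('a::topological_space \<Rightarrow> ereal) \<Rightarrow> bool" where
  "lsc_ext f \<longleftrightarrow> (\<forall>x. f x \<le> Liminf (at x) f)"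

definition sublevel0 :: "('a \<Rightarrow> ereal) \<Rightarrow> 'a set" where
  "sublevel0 f = {x. f x \<le> 0}"

definition subdiff :: "('a::real_normed_vector \<Rightarrow> ereal) \<Rightarrow> 'a \<Rightarrow> ('a \<Rightarrow>\<^sub>L real) set" where
  "subdiff f x = (if f x = \<infinity> then {} else
     {s. \<forall>y. f x + ereal (blinfun_apply s (y - x)) \<le> f y})"

text \<open>d(0, \<partial>f(x)), equal to +\<infinity> if the subdifferential is empty.\<close>
definition dist0_subdiff :: "('a::real_normed_vector \<Rightarrow> ereal) \<Rightarrow> 'a \<Rightarrow> ereal" where
  "dist0_subdiff f x = (INF s\<in>subdiff f x. ereal (norm s))"

definition fplus_pow :: "('a \<Rightarrow> ereal) \<Rightarrow> real \<Rightarrow> 'a \<Rightarrow> ereal" where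
  "fplus_pow f q x = (if f x = \<infinity> then \<infinity> else ereal (max (real_of_ereal (f x)) 0 powr q))"

definition epow :: "ereal \<Rightarrow> real \<Rightarrow> ereal" where
  "epow t q = (if t = \<infinity> then \<infinity> else ereal (real_of_ereal t powr q))"

text \<open>Quantity in (ii): f^{q-1}(x) d(0,\<partial>f(x)) for f(x) > 0; at points with f(x)=+\<infinity>
  (where \<partial>f(x) = \<emptyset>) the value is +\<infinity>.\<close>
definition slope_ii :: "('a::real_normed_vector \<Rightarrow> ereal) \<Rightarrow> real \<Rightarrow> 'a \<Rightarrow> ereal" where
  "slope_ii f q x = (if f x = \<infinity> then \<infinity> else
      ereal (real_of_ereal (f x) powr (q - 1)) * dist0_subdiff f x)"

definition slope_iii :: "('a::real_normed_vector \<Rightarrow> ereal) \<Rightarrow> real \<Rightarrow> 'a \<Rightarrow> ereal" where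
  "slope_iii f q x = ereal (infdist x (sublevel0 f) powr (q - 1)) * epow (dist0_subdiff f x) q"

end

theory Submission
  imports Defs
begin

lemma hahn_banach_sublinear:
  fixes p :: "'a::real_vector \<Rightarrow> real"
  assumes sub: "\<And>x y. p (x + y) \<le> p x + p y"
    and hom: "\<And>c x. 0 < c \<Longrightarrow> p (c *\<^sub>R x) = c * p x"
  shows "\<exists>s. linear s \<and> (\<forall>x. s x \<le> p x)"
proof -
  have p0: "p 0 = 0" using hom[of 2 0] by simp
  define A where "A = {G :: ('a \<times> real) set. (0,0) \<in> G \<and>
     (\<forall>x a y b. (x,a) \<in> G \<longrightarrow> (y,b) \<in> G \<longrightarrow> (x+y, a+b) \<in> G) \<and>
     (\<forall>x a c. (x,a) \<in> G \<longrightarrow> (c *\<^sub>R x, c*a) \<in> G) \<and>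
     (\<forall>x a b. (x,a) \<in> G \<longrightarrow> (x,b) \<in> G \<longrightarrow> a = b) \<and>
     (\<forall>x a. (x,a) \<in> G \<longrightarrow> a \<le> p x)}"
  have A0: "\<And>X. X \<in> A \<Longrightarrow> (0,0) \<in> X"
    and Aadd: "\<And>X x a y b. X \<in> A \<Longrightarrow> (x,a) \<in> X \<Longrightarrow> (y,b) \<in> X \<Longrightarrow> (x+y, a+b) \<in> X"
    and Asc: "\<And>X x a c. X \<in> A \<Longrightarrow> (x,a) \<in> X \<Longrightarrow> (c *\<^sub>R x, c*a) \<in> X"
    and Afun: "\<And>X x a b. X \<in> A \<Longrightarrow> (x,a) \<in> X \<Longrightarrow> (x,b) \<in> X \<Longrightarrow> a = b"
    and Adom: "\<And>X x a. X \<in> A \<Longrightarrow> (x,a) \<in> X \<Longrightarrow> a \<le> p x"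
    unfolding A_def by blast+
  have "\<exists>M\<in>A. \<forall>X\<in>A. M \<subseteq> X \<longrightarrow> X = M"
  proof (rule Zorn_Lemma2, intro ballI)
    fix C assume C: "C \<in> chains A"
    show "\<exists>U\<in>A. \<forall>X\<in>C. X \<subseteq> U"
    proof (cases "C = {}")
      case True
      have "{(0,0)} \<in> A" unfolding A_def using p0 by auto
      then show ?thesis using True by blast
    next
      case False
      have CA: "C \<subseteq> A" using chainsD2[OF C] .
      have ch: "\<And>X Y. X \<in> C \<Longrightarrow> Y \<in> C \<Longrightarrow> X \<subseteq> Y \<or> Y \<subseteq> X" using chainsD[OF C] by blast
      have "\<Union>C \<in> A"
        unfolding A_def
      proof (intro CollectI conjI allI impI)
        show "(0,0) \<in> \<Union>C" using False CA A0 by blast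
      next
        fix x a y b assume "(x,a) \<in> \<Union>C" "(y,b) \<in> \<Union>C"
        then obtain X Y where XY: "X \<in> C" "Y \<in> C" "(x,a) \<in> X" "(y,b) \<in> Y" by blast
        show "(x+y, a+b) \<in> \<Union>C"
        proof (cases "X \<subseteq> Y")
          case True
          then show ?thesis using XY CA Aadd[of Y x a y b] by blast
        next
          case False
          then have "Y \<subseteq> X" using ch XY by blast
          then show ?thesis using XY CA Aadd[of X x a y b] by blast
        qed
      next
        fix x a c assume "(x,a) \<in> \<Union>C"
        then show "(c *\<^sub>R x, c*a) \<in> \<Union>C" using CA Asc by blast
      next
        fix x a b assume "(x,a) \<in> \<Union>C" "(x,b) \<in> \<Union>C"
        then obtain X Y where XY: "X \<in> C" "Y \<in> C" "(x,a) \<in> X" "(x,b) \<in> Y" by blast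
        show "a = b"
        proof (cases "X \<subseteq> Y")
          case True
          then show ?thesis using XY CA Afun[of Y x a b] by blast
        next
          case False
          then have "Y \<subseteq> X" using ch XY by blast
          then show ?thesis using XY CA Afun[of X x a b] by blast
        qed
      next
        fix x a assume "(x,a) \<in> \<Union>C"
        then show "a \<le> p x" using CA Adom by blast
      qed
      then show ?thesis by blast
    qed
  qed
  then obtain M where MA: "M \<in> A" and Mmax: "\<And>X. X \<in> A \<Longrightarrow> M \<subseteq> X \<Longrightarrow> X = M" by blast
  have M0: "(0,0) \<in> M"
    and Madd: "\<And>x a y b. (x,a) \<in> M \<Longrightarrow> (y,b) \<in> M \<Longrightarrow> (x+y, a+b) \<in> M"
    and Msc: "\<And>x a c. (x,a) \<in> M \<Longrightarrow> (c *\<^sub>R x, c*a) \<in> M"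
    and Mfun: "\<And>x a b. (x,a) \<in> M \<Longrightarrow> (x,b) \<in> M \<Longrightarrow> a = b"
    and Mdom: "\<And>x a. (x,a) \<in> M \<Longrightarrow> a \<le> p x"
    using MA A0 Aadd Asc Afun Adom by blast+
  have key: "\<And>m a m' a'. (m,a) \<in> M \<Longrightarrow> (m',a') \<in> M \<Longrightarrow> a - p (m - x0) \<le> p (m' + x0) - a'" for x0
  proof -
    fix m a m' a' assume "(m,a) \<in> M" "(m',a') \<in> M"
    then have "(m + m', a + a') \<in> M" by (rule Madd)
    then have "a + a' \<le> p (m + m')" by (rule Mdom)
    also have "\<dots> = p ((m - x0) + (m' + x0))" by (simp add: algebra_simps)
    also have "\<dots> \<le> p (m - x0) + p (m' + x0)" by (rule sub)
    finally show "a - p (m - x0) \<le> p (m' + x0) - a'" by simp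
  qed
  have total: "\<forall>x. \<exists>a. (x,a) \<in> M"
  proof (rule ccontr)
    assume "\<not> (\<forall>x. \<exists>a. (x,a) \<in> M)"
    then obtain x0 where x0: "\<And>a. (x0,a) \<notin> M" by blast
    define T where "T = {a - p (m - x0) | m a. (m,a) \<in> M}"
    define c where "c = Sup T"
    have Tne: "T \<noteq> {}" using M0 unfolding T_def by blast
    have Tbdd: "bdd_above T" unfolding T_def bdd_above_def
      using key[OF _ M0, of _ _ x0] by auto
    have cge: "\<And>m a. (m,a) \<in> M \<Longrightarrow> a - p (m - x0) \<le> c"
      unfolding c_def by (rule cSup_upper[OF _ Tbdd]) (auto simp: T_def)
    have cle: "\<And>m a. (m,a) \<in> M \<Longrightarrow> c \<le> p (m + x0) - a"
      unfolding c_def by (rule cSup_least[OF Tne]) (auto simp: T_def intro: key)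
    define M' where "M' = {(m + t *\<^sub>R x0, a + t * c) | m a t. (m,a) \<in> M}"
    have sub': "M \<subseteq> M'" unfolding M'_def by force
    have new: "(x0, c) \<in> M'" unfolding M'_def using M0 by force
    have "M' \<in> A"
      unfolding A_def
    proof (intro CollectI conjI allI impI)
      show "(0,0) \<in> M'" using sub' M0 by blast
    next
      fix x a y b assume "(x,a) \<in> M'" "(y,b) \<in> M'"
      then obtain m1 a1 t1 m2 a2 t2 where "(m1,a1) \<in> M" "(m2,a2) \<in> M"
        "x = m1 + t1 *\<^sub>R x0" "a = a1 + t1 * c" "y = m2 + t2 *\<^sub>R x0" "b = a2 + t2 * c"
        unfolding M'_def by blast
      then show "(x+y, a+b) \<in> M'" unfolding M'_def
        by (intro CollectI exI[of _ "m1+m2"] exI[of _ "a1+a2"] exI[of _ "t1+t2"])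
           (auto simp: algebra_simps intro: Madd)
    next
      fix x a k assume "(x,a) \<in> M'"
      then obtain m1 a1 t1 where "(m1,a1) \<in> M" "x = m1 + t1 *\<^sub>R x0" "a = a1 + t1 * c"
        unfolding M'_def by blast
      then have "(k *\<^sub>R m1, k*a1) \<in> M" "(k *\<^sub>R x, k*a) = (k *\<^sub>R m1 + (k*t1) *\<^sub>R x0, k*a1 + (k*t1)*c)"
        using Msc by (auto simp: algebra_simps)
      then show "(k *\<^sub>R x, k*a) \<in> M'" unfolding M'_def by blast
    next
      fix x a b assume "(x,a) \<in> M'" "(x,b) \<in> M'"
      then obtain m1 a1 t1 m2 a2 t2 where h: "(m1,a1) \<in> M" "(m2,a2) \<in> M"
        "x = m1 + t1 *\<^sub>R x0" "a = a1 + t1 * c" "x = m2 + t2 *\<^sub>R x0" "b = a2 + t2 * c"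
        unfolding M'_def by blast
      have t: "t1 = t2"
      proof (rule ccontr)
        assume ne: "t1 \<noteq> t2"
        have "(-1) *\<^sub>R m1 = - m1" by simp
        have "(- m1, - a1) \<in> M" using Msc[OF h(1), of "-1"] by simp
        then have "(m2 - m1, a2 - a1) \<in> M" using Madd[OF h(2)] by fastforce
        then have "((1/(t1 - t2)) *\<^sub>R (m2 - m1), (1/(t1-t2)) * (a2 - a1)) \<in> M"
          using Msc by blast
        moreover have "(1/(t1 - t2)) *\<^sub>R (m2 - m1) = x0"
        proof -
          have "m2 - m1 = (t1 - t2) *\<^sub>R x0" using h(3,5) by (simp add: algebra_simps)
          then show ?thesis using ne by simp
        qed
        ultimately show False using x0 by metis
      qed
      then have "m1 = m2" using h(3,5) by simp
      then have "a1 = a2" using h(1,2) Mfun by blast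
      then show "a = b" using h t by simp
    next
      fix x a assume "(x,a) \<in> M'"
      then obtain m a1 t where h: "(m,a1) \<in> M" "x = m + t *\<^sub>R x0" "a = a1 + t * c"
        unfolding M'_def by blast
      consider "t = 0" | "t > 0" | "t < 0" by linarith
      then show "a \<le> p x"
      proof cases
        case 1 then show ?thesis using h Mdom by simp
      next
        case 2
        have "((1/t) *\<^sub>R m, (1/t) * a1) \<in> M" using Msc[OF h(1)] .
        then have "c \<le> p ((1/t) *\<^sub>R m + x0) - (1/t) * a1" by (rule cle)
        then have "t * c \<le> t * (p ((1/t) *\<^sub>R m + x0) - (1/t) * a1)" using 2
          by (simp add: mult_left_mono)
        then have "t * c \<le> t * p ((1/t) *\<^sub>R m + x0) - a1" using 2
          by (simp add: right_diff_distrib)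
        also have "t * p ((1/t) *\<^sub>R m + x0) = p (t *\<^sub>R ((1/t) *\<^sub>R m + x0))"
          using hom[OF 2] by simp
        also have "t *\<^sub>R ((1/t) *\<^sub>R m + x0) = x" using 2 h(2) by (simp add: algebra_simps)
        finally show ?thesis using h(3) by simp
      next
        case 3
        define u where "u = -t"
        have u: "u > 0" using 3 u_def by simp
        have "((1/u) *\<^sub>R m, (1/u) * a1) \<in> M" using Msc[OF h(1)] .
        then have "(1/u) * a1 - p ((1/u) *\<^sub>R m - x0) \<le> c" by (rule cge)
        then have "u * ((1/u) * a1 - p ((1/u) *\<^sub>R m - x0)) \<le> u * c" using u
          by (simp add: mult_left_mono)
        then have "a1 - u * p ((1/u) *\<^sub>R m - x0) \<le> u * c" using u
          by (simp add: right_diff_distrib)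
        also have "u * p ((1/u) *\<^sub>R m - x0) = p (u *\<^sub>R ((1/u) *\<^sub>R m - x0))"
          using hom[OF u] by simp
        also have "u *\<^sub>R ((1/u) *\<^sub>R m - x0) = x" using u h(2) u_def by (simp add: algebra_simps)
        finally show ?thesis using h(3) u_def by simp
      qed
    qed
    then have "M' = M" using Mmax sub' by blast
    then show False using new x0 by blast
  qed
  define s where "s x = (THE a. (x,a) \<in> M)" for x
  have sM: "(x, s x) \<in> M" for x
  proof -
    obtain a where "(x,a) \<in> M" using total by blast
    then show ?thesis unfolding s_def by (rule theI) (use Mfun \<open>(x,a) \<in> M\<close> in blast)
  qed
  have "linear s"
  proof (rule linearI)
    fix x y show "s (x + y) = s x + s y" using Madd[OF sM[of x] sM[of y]] sM Mfun by blast
  next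
    fix c x show "s (c *\<^sub>R x) = c *\<^sub>R s x" using Msc[OF sM[of x], of c] sM Mfun by auto
  qed
  moreover have "\<forall>x. s x \<le> p x" using sM Mdom by blast
  ultimately show ?thesis by blast
qed


lemma ekeland:
  fixes G :: "'a::{metric_space,complete_space} \<Rightarrow> real"
  assumes lsc: "\<And>c. closed {y. G y \<le> c}" and nonneg: "\<And>y. 0 \<le> G y" and k: "0 < k"
  shows "\<exists>z. G z + k * dist z x0 \<le> G x0 \<and> (\<forall>y. G z \<le> G y + k * dist y z)"
proof -
  define S where "S w = {y. G y + k * dist y w \<le> G w}" for w
  have refl: "w \<in> S w" for w unfolding S_def by simp
  have trans: "y \<in> S b" if "y \<in> S a" "a \<in> S b" for y a b
  proof -
    have "k * dist y b \<le> k * (dist y a + dist a b)"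
      using dist_triangle[of y b a] k by (intro mult_left_mono) auto
    then have "G y + k * dist y b \<le> G y + k * dist y a + k * dist a b"
      by (simp add: distrib_left)
    also have "\<dots> \<le> G b" using that unfolding S_def by simp
    finally show ?thesis unfolding S_def by simp
  qed
  have lscev: "eventually (\<lambda>y. G z - e < G y) (nhds z)" if "e > 0" for z e
  proof -
    have "open (- {y. G y \<le> G z - e})" using lsc by (simp add: open_Compl)
    moreover have "z \<in> - {y. G y \<le> G z - e}" using that by simp
    ultimately have "eventually (\<lambda>y. y \<in> - {y. G y \<le> G z - e}) (nhds z)"
      by (rule eventually_nhds_in_open)
    then show ?thesis by (rule eventually_mono) auto
  qed
  have closedS: "closed (S w)" for w
  proof -
    have "open (- S w)"
    proof (rule iffD2[OF open_subopen], intro ballI)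
      fix y assume y: "y \<in> - S w"
      define d where "d = G y + k * dist y w - G w"
      have d: "d > 0" using y unfolding d_def S_def by simp
      have e1: "eventually (\<lambda>y'. G y - d/2 < G y') (nhds y)" using lscev d by simp
      have e2: "eventually (\<lambda>y'. dist y' y < d/(2*k)) (nhds y)"
        using d k unfolding eventually_nhds_metric by (intro exI[of _ "d/(2*k)"]) (auto simp: dist_commute)
      have "eventually (\<lambda>y'. y' \<in> - S w) (nhds y)"
        using e1 e2
      proof eventually_elim
        case (elim y')
        have "dist y w \<le> dist y' w + dist y' y" using dist_triangle2[of y w y'] by (simp add: dist_commute)
        then have "k * dist y w \<le> k * (dist y' w + dist y' y)" using k
          by (intro mult_left_mono) auto
        then have "k * dist y w \<le> k * dist y' w + k * dist y' y"
          by (simp add: distrib_left)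
        moreover have "k * dist y' y < d/2" using elim(2) k by (simp add: field_simps)
        ultimately have "\<not> G y' + k * dist y' w \<le> G w" using elim(1) unfolding d_def by argo
        then show ?case unfolding S_def by simp
      qed
      then obtain T where "open T" "y \<in> T" "\<forall>x\<in>T. x \<in> - S w" unfolding eventually_nhds by blast
      then show "\<exists>T. open T \<and> y \<in> T \<and> T \<subseteq> - S w" by blast
    qed
    then show ?thesis by (simp add: closed_def)
  qed
  have bdd: "bdd_below (G ` S w)" for w using nonneg by (intro bdd_belowI[of _ 0]) auto
  have ex: "\<exists>y. y \<in> S w \<and> G y \<le> Inf (G ` S w) + (1/2)^n" for w n
  proof -
    have "Inf (G ` S w) < Inf (G ` S w) + (1/2)^n" by simp
    then obtain v where "v \<in> G ` S w" "v < Inf (G ` S w) + (1/2)^n"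
      using cInf_lessD[of "G ` S w"] refl by blast
    then show ?thesis by force
  qed
  define nxt where "nxt n w = (SOME y. y \<in> S w \<and> G y \<le> Inf (G ` S w) + (1/2)^n)" for n w
  have nxt: "nxt n w \<in> S w \<and> G (nxt n w) \<le> Inf (G ` S w) + (1/2)^n" for n w
    unfolding nxt_def by (rule someI_ex[OF ex])
  define zs where "zs = rec_nat x0 nxt"
  have zs0: "zs 0 = x0" and zsS: "zs (Suc n) = nxt n (zs n)" for n unfolding zs_def by simp_all
  have P2: "zs m \<in> S (zs n)" if "n \<le> m" for m n
    using that
  proof (induction m rule: dec_induct)
    case base then show ?case by (rule refl)
  next
    case (step m)
    have "zs (Suc m) \<in> S (zs m)" using nxt zsS by simp
    then show ?case using trans step by blast
  qed
  have P3: "k * dist y (zs (Suc n)) \<le> (1/2)^n" if "y \<in> S (zs (Suc n))" for y n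
  proof -
    have "y \<in> S (zs n)" using trans[OF that] nxt zsS by simp
    then have "Inf (G ` S (zs n)) \<le> G y" using bdd by (auto intro: cInf_lower)
    then have "G (zs (Suc n)) - (1/2)^n \<le> G y" using nxt[of n "zs n"] zsS by simp
    moreover have "G y + k * dist y (zs (Suc n)) \<le> G (zs (Suc n))" using that unfolding S_def by simp
    ultimately show ?thesis by simp
  qed
  have small: "\<exists>N. (1/2::real)^N < e" if "e > 0" for e
    using real_arch_pow_inv[OF that, of "1/2"] by simp
  have "Cauchy zs"
  proof (rule metric_CauchyI)
    fix e :: real assume e: "e > 0"
    have "e * k / 2 > 0" using e k by simp
    then obtain N where N: "(1/2::real)^N < e * k / 2" using small by blast
    show "\<exists>M. \<forall>m\<ge>M. \<forall>n\<ge>M. dist (zs m) (zs n) < e"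
    proof (intro exI[of _ "Suc N"] allI impI)
      fix m n assume "Suc N \<le> m" "Suc N \<le> n"
      then have "k * dist (zs m) (zs (Suc N)) \<le> (1/2)^N" "k * dist (zs n) (zs (Suc N)) \<le> (1/2)^N"
        using P2 P3 by blast+
      moreover have "k * dist (zs m) (zs n) \<le> k * (dist (zs m) (zs (Suc N)) + dist (zs n) (zs (Suc N)))"
        using dist_triangle2[of "zs m" "zs n" "zs (Suc N)"] k by (intro mult_left_mono) auto
      ultimately have "k * dist (zs m) (zs n) \<le> 2 * (1/2)^N"
        by (simp add: distrib_left)
      then have "k * dist (zs m) (zs n) < k * e" using N by (simp add: algebra_simps)
      then show "dist (zs m) (zs n) < e" using k by simp
    qed
  qed
  then obtain z where lim: "zs \<longlonglongrightarrow> z" using Cauchy_convergent_iff convergent_def by blast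
  have zS: "z \<in> S (zs n)" for n
    by (rule Lim_in_closed_set[OF closedS _ _ lim]) (auto intro: P2 simp: eventually_sequentially)
  have uniq: "y = z" if "y \<in> S z" for y
  proof -
    have bnd: "k * dist y z \<le> 2 * (1/2)^n" for n
    proof -
      have "k * dist y (zs (Suc n)) \<le> (1/2)^n" using P3 trans[OF that zS] by blast
      moreover have "k * dist z (zs (Suc n)) \<le> (1/2)^n" using P3 zS by blast
      moreover have "k * dist y z \<le> k * (dist y (zs (Suc n)) + dist z (zs (Suc n)))"
        using dist_triangle2[of y z "zs (Suc n)"] k by (intro mult_left_mono) auto
      ultimately show ?thesis by (simp add: distrib_left)
    qed
    have "dist y z = 0"
    proof (rule ccontr)
      assume "dist y z \<noteq> 0"
      then have "k * dist y z / 2 > 0" using k by simp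
      then obtain N where "(1/2::real)^N < k * dist y z / 2" using small by blast
      then show False using bnd[of N] by simp
    qed
    then show ?thesis by simp
  qed
  have "G z + k * dist z x0 \<le> G x0" using zS[of 0] zs0 unfolding S_def by simp
  moreover have "G z \<le> G y + k * dist y z" for y
  proof (cases "y = z")
    case True then show ?thesis by simp
  next
    case False
    then have "y \<notin> S z" using uniq by blast
    then show ?thesis unfolding S_def by simp
  qed
  ultimately show ?thesis by blast
qed

lemma subgrad_exists:
  fixes f :: "'a::real_normed_vector \<Rightarrow> ereal"
  assumes proper: "proper_ext f" and conv: "convex_ext f" and fz: "f z \<noteq> \<infinity>" and L: "0 \<le> L"
    and low: "\<And>y. f z - ereal (L * norm (y - z)) \<le> f y"
  shows "\<exists>s \<in> subdiff f z. norm s \<le> L"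
proof -
  have hf: "f y = ereal (real_of_ereal (f y))" if "f y \<noteq> \<infinity>" for y
    using proper that unfolding proper_ext_def by (cases "f y") auto
  define r where "r = real_of_ereal (f z)"
  have fzr: "f z = ereal r" using hf[OF fz] r_def by simp
  have lowr: "r - L * norm (y - z) \<le> real_of_ereal (f y)" if "f y \<noteq> \<infinity>" for y
  proof -
    have "ereal r - ereal (L * norm (y - z)) \<le> ereal (real_of_ereal (f y))"
      using low[of y] hf[OF that] fzr by metis
    then show ?thesis by simp
  qed
  define Q where "Q v = {(real_of_ereal (f (z + t *\<^sub>R w)) - r) / t + L * norm (v - w) | t w. t > 0 \<and> f (z + t *\<^sub>R w) \<noteq> \<infinity>}" for v
  define p where "p v = Inf (Q v)" for v
  have Qne: "L * norm v \<in> Q v" for v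
    unfolding Q_def using fz fzr by (intro CollectI exI[of _ 1] exI[of _ 0]) auto
  have Qlow: "- L * norm v \<le> e" if eQ: "e \<in> Q v" for e v
  proof -
    obtain t w where tw: "t > 0" "f (z + t *\<^sub>R w) \<noteq> \<infinity>"
      "e = (real_of_ereal (f (z + t *\<^sub>R w)) - r) / t + L * norm (v - w)"
      using eQ unfolding Q_def by blast
    have "r - L * norm (t *\<^sub>R w) \<le> real_of_ereal (f (z + t *\<^sub>R w))"
      using lowr[OF tw(2)] by simp
    then have "- L * norm w \<le> (real_of_ereal (f (z + t *\<^sub>R w)) - r) / t"
      using tw(1) by (simp add: field_simps abs_of_pos)
    moreover have "L * norm w - L * norm v \<le> L * norm (v - w)"
      using L norm_triangle_ineq2[of w v] by (simp add: norm_minus_commute right_diff_distrib[symmetric] mult_left_mono)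
    ultimately show ?thesis using tw(3) by simp
  qed
  have bddQ: "bdd_below (Q v)" for v using Qlow by (intro bdd_belowI) 
  have plow: "- L * norm v \<le> p v" for v
    unfolding p_def using Qne Qlow by (intro cInf_greatest) auto
  have pup: "p v \<le> L * norm v" for v
    unfolding p_def using Qne bddQ by (intro cInf_lower) auto
  have pf: "p v \<le> real_of_ereal (f (z + v)) - r" if "f (z + v) \<noteq> \<infinity>" for v
  proof -
    have "real_of_ereal (f (z + v)) - r \<in> Q v"
      unfolding Q_def using that by (intro CollectI exI[of _ 1] exI[of _ v]) auto
    then show ?thesis unfolding p_def using bddQ by (intro cInf_lower) auto
  qed
  have hom1: "p (c *\<^sub>R v) \<le> c * p v" if c: "c > 0" for c v
  proof -
    have "p (c *\<^sub>R v) / c \<le> p v"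
      unfolding p_def
    proof (rule cInf_greatest)
      show "Q v \<noteq> {}" using Qne by blast
    next
      fix e assume "e \<in> Q v"
      then obtain t w where tw: "t > 0" "f (z + t *\<^sub>R w) \<noteq> \<infinity>"
        "e = (real_of_ereal (f (z + t *\<^sub>R w)) - r) / t + L * norm (v - w)"
        unfolding Q_def by blast
      have eq: "(t / c) *\<^sub>R (c *\<^sub>R w) = t *\<^sub>R w" using c by simp
      have "(real_of_ereal (f (z + (t/c) *\<^sub>R (c *\<^sub>R w))) - r) / (t/c) + L * norm (c *\<^sub>R v - c *\<^sub>R w) \<in> Q (c *\<^sub>R v)"
        unfolding Q_def using tw c eq by (intro CollectI exI[of _ "t/c"] exI[of _ "c *\<^sub>R w"]) auto
      moreover have "(real_of_ereal (f (z + (t/c) *\<^sub>R (c *\<^sub>R w))) - r) / (t/c) + L * norm (c *\<^sub>R v - c *\<^sub>R w) = c * e"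
      proof -
        have "norm (c *\<^sub>R v - c *\<^sub>R w) = c * norm (v - w)"
          using c by (simp add: scaleR_right_diff_distrib[symmetric])
        then show ?thesis unfolding tw(3) using tw(1) c eq by (simp add: field_simps)
      qed
      ultimately have "Inf (Q (c *\<^sub>R v)) \<le> c * e" using bddQ by (metis cInf_lower)
      then show "Inf (Q (c *\<^sub>R v)) / c \<le> e" using c by (simp add: field_simps)
    qed
    then show ?thesis using c by (simp add: field_simps)
  qed
  have hom: "p (c *\<^sub>R v) = c * p v" if c: "c > 0" for c v
  proof -
    have "p v = p ((1/c) *\<^sub>R (c *\<^sub>R v))" using c by simp
    also have "\<dots> \<le> (1/c) * p (c *\<^sub>R v)" using hom1[of "1/c" "c *\<^sub>R v"] c by simp
    finally have "c * p v \<le> p (c *\<^sub>R v)" using c by (simp add: field_simps)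
    then show ?thesis using hom1[OF c, of v] by linarith
  qed
  have sub: "p (v1 + v2) \<le> p v1 + p v2" for v1 v2
  proof -
    have main: "p (v1 + v2) \<le> e1 + e2" if eQ: "e1 \<in> Q v1" "e2 \<in> Q v2" for e1 e2
    proof -
      obtain t1 w1 where tw1: "t1 > 0" "f (z + t1 *\<^sub>R w1) \<noteq> \<infinity>"
        "e1 = (real_of_ereal (f (z + t1 *\<^sub>R w1)) - r) / t1 + L * norm (v1 - w1)"
        using eQ(1) unfolding Q_def by blast
      obtain t2 w2 where tw2: "t2 > 0" "f (z + t2 *\<^sub>R w2) \<noteq> \<infinity>"
        "e2 = (real_of_ereal (f (z + t2 *\<^sub>R w2)) - r) / t2 + L * norm (v2 - w2)"
        using eQ(2) unfolding Q_def by blast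
      define a1 where "a1 = real_of_ereal (f (z + t1 *\<^sub>R w1))"
      define a2 where "a2 = real_of_ereal (f (z + t2 *\<^sub>R w2))"
      define lam where "lam = t2 / (t1 + t2)"
      define t where "t = t1 * t2 / (t1 + t2)"
      have t: "t > 0" using tw1 tw2 t_def by simp
      have lam: "0 \<le> lam" "lam \<le> 1" using tw1 tw2 lam_def by auto
      have e1: "lam * t1 = t" and e2: "(1 - lam) * t2 = t" using tw1 tw2 unfolding lam_def t_def
        by (simp_all add: field_simps)
      have pt: "lam *\<^sub>R (z + t1 *\<^sub>R w1) + (1 - lam) *\<^sub>R (z + t2 *\<^sub>R w2) = z + t *\<^sub>R (w1 + w2)"
      proof -
        have "lam *\<^sub>R (z + t1 *\<^sub>R w1) + (1 - lam) *\<^sub>R (z + t2 *\<^sub>R w2)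
            = (lam + (1 - lam)) *\<^sub>R z + (lam * t1) *\<^sub>R w1 + ((1 - lam) * t2) *\<^sub>R w2"
          by (simp add: algebra_simps)
        also have "\<dots> = z + t *\<^sub>R (w1 + w2)" using e1 e2 by (simp add: scaleR_add_right)
        finally show ?thesis .
      qed
      have "f (z + t *\<^sub>R (w1 + w2)) \<le> ereal lam * f (z + t1 *\<^sub>R w1) + ereal (1 - lam) * f (z + t2 *\<^sub>R w2)"
        using conv lam unfolding convex_ext_def pt[symmetric] by blast
      also have "\<dots> = ereal (lam * a1 + (1 - lam) * a2)"
        using hf[OF tw1(2)] hf[OF tw2(2)] unfolding a1_def a2_def by (metis times_ereal.simps(1) plus_ereal.simps(1))
      finally have fle: "f (z + t *\<^sub>R (w1 + w2)) \<le> ereal (lam * a1 + (1 - lam) * a2)" .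
      then have fin: "f (z + t *\<^sub>R (w1 + w2)) \<noteq> \<infinity>" by auto
      have rle: "real_of_ereal (f (z + t *\<^sub>R (w1 + w2))) \<le> lam * a1 + (1 - lam) * a2"
        using fle hf[OF fin] by (metis ereal_less_eq(3))
      have mem: "(real_of_ereal (f (z + t *\<^sub>R (w1 + w2))) - r) / t + L * norm ((v1 + v2) - (w1 + w2)) \<in> Q (v1 + v2)"
        unfolding Q_def using t fin by blast
      have "(real_of_ereal (f (z + t *\<^sub>R (w1 + w2))) - r) / t \<le> (lam * a1 + (1 - lam) * a2 - r) / t"
        using rle t by (simp add: divide_right_mono)
      also have "\<dots> = (lam * (a1 - r) + (1 - lam) * (a2 - r)) / t" by (simp add: algebra_simps)
      also have "\<dots> = (a1 - r) / t1 + (a2 - r) / t2"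
      proof -
        have "lam / t = 1 / t1" "(1 - lam) / t = 1 / t2" using e1 e2 t tw1(1) tw2(1)
          by (auto simp: field_simps)
        then show ?thesis by (simp add: add_divide_distrib) (metis times_divide_eq_left times_divide_eq_right mult.commute divide_divide_eq_left mult_1)
      qed
      finally have A: "(real_of_ereal (f (z + t *\<^sub>R (w1 + w2))) - r) / t \<le> (a1 - r) / t1 + (a2 - r) / t2" .
      have B: "L * norm ((v1 + v2) - (w1 + w2)) \<le> L * norm (v1 - w1) + L * norm (v2 - w2)"
      proof -
        have "norm ((v1 + v2) - (w1 + w2)) \<le> norm (v1 - w1) + norm (v2 - w2)"
          using norm_triangle_ineq[of "v1 - w1" "v2 - w2"] by (simp add: algebra_simps)
        then show ?thesis using L by (metis distrib_left mult_left_mono)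
      qed
      have "p (v1 + v2) \<le> (real_of_ereal (f (z + t *\<^sub>R (w1 + w2))) - r) / t + L * norm ((v1 + v2) - (w1 + w2))"
        unfolding p_def using mem bddQ by (intro cInf_lower) auto
      also have "\<dots> \<le> e1 + e2" using A B tw1(3) tw2(3) a1_def a2_def by simp
      finally show ?thesis .
    qed
    have "p (v1 + v2) - e2 \<le> p v1" if e2: "e2 \<in> Q v2" for e2
      unfolding p_def[of v1]
    proof (rule cInf_greatest)
      show "Q v1 \<noteq> {}" using Qne by blast
    next
      fix x assume "x \<in> Q v1"
      then have "p (v1 + v2) \<le> x + e2" using main e2 by blast
      then show "p (v1 + v2) - e2 \<le> x" by linarith
    qed
    then have "p (v1 + v2) - p v1 \<le> p v2"
      unfolding p_def[of v2]
    proof (intro cInf_greatest)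
      show "Q v2 \<noteq> {}" using Qne by blast
    next
      fix x assume "x \<in> Q v2"
      then have "p (v1 + v2) - x \<le> p v1" using \<open>\<And>e2. e2 \<in> Q v2 \<Longrightarrow> p (v1 + v2) - e2 \<le> p v1\<close> by blast
      then show "p (v1 + v2) - p v1 \<le> x" by linarith
    qed
    then show ?thesis by simp
  qed
  obtain s where s: "linear s" "\<And>x. s x \<le> p x"
    using hahn_banach_sublinear[of p, OF sub hom] by blast
  have sbound: "norm (s x) \<le> L * norm x" for x
  proof -
    have "s x \<le> L * norm x" using s(2) pup order_trans by blast
    moreover have "- s x \<le> L * norm x"
      using s(2)[of "- x"] pup[of "- x"] linear_neg[OF s(1)] by simp
    ultimately show ?thesis by simp
  qed
  have bl: "bounded_linear s"
    using s(1) sbound by (intro bounded_linear_intro[of _ L]) (auto simp: linear_add linear_scale mult.commute)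
  define S where "S = Blinfun s"
  have Sapp: "blinfun_apply S = s" unfolding S_def using bl by (rule bounded_linear_Blinfun_apply)
  have "S \<in> subdiff f z"
    unfolding subdiff_def using fz
  proof (simp, intro allI)
    fix y
    show "f z + ereal (blinfun_apply S (y - z)) \<le> f y"
    proof (cases "f y = \<infinity>")
      case True then show ?thesis by simp
    next
      case False
      have "s (y - z) \<le> real_of_ereal (f y) - r" using s(2)[of "y - z"] pf[of "y - z"] False by simp
      then show ?thesis using Sapp fzr hf[OF False] by (metis ereal_less_eq(3) plus_ereal.simps(1) add.commute le_diff_eq)
    qed
  qed
  moreover have "norm S \<le> L" using L sbound Sapp by (intro norm_blinfun_bound) auto
  ultimately show ?thesis by blast
qed

lemma closed_sublevel:
  fixes f :: "'a::topological_space \<Rightarrow> ereal"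
  assumes "lsc_ext f"
  shows "closed {x. f x \<le> c}"
proof -
  have "open (- {x. f x \<le> c})"
  proof (rule iffD2[OF open_subopen], intro ballI)
    fix x assume x: "x \<in> - {x. f x \<le> c}"
    then have "c < f x" by simp
    also have "f x \<le> Liminf (at x) f" using assms unfolding lsc_ext_def by blast
    finally have "eventually (\<lambda>y. f y > c) (at x)" by (rule less_LiminfD)
    moreover have "f x > c" using x by simp
    ultimately have "eventually (\<lambda>y. f y > c) (nhds x)" unfolding eventually_nhds_conv_at by simp
    then obtain T where "open T" "x \<in> T" "\<forall>y\<in>T. f y > c" unfolding eventually_nhds by blast
    then show "\<exists>T. open T \<and> x \<in> T \<and> T \<subseteq> - {x. f x \<le> c}" by (intro exI[of _ T]) auto
  qed
  then show ?thesis by (simp add: closed_def)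
qed

lemma powr_le_iff_root:
  fixes u c q :: real
  assumes "0 \<le> u" "0 \<le> c" "0 < q"
  shows "u powr q \<le> c \<longleftrightarrow> u \<le> c powr (1/q)"
proof
  assume "u powr q \<le> c"
  then have "(u powr q) powr (1/q) \<le> c powr (1/q)" using assms by (intro powr_mono2) auto
  then show "u \<le> c powr (1/q)" using assms by (simp add: powr_powr)
next
  assume "u \<le> c powr (1/q)"
  then have "u powr q \<le> (c powr (1/q)) powr q" using assms by (intro powr_mono2) auto
  then show "u powr q \<le> c" using assms by (simp add: powr_powr)
qed

lemma tangent_powr:
  fixes y b q :: real
  assumes "0 \<le> y" "0 < b" "0 < q" "q \<le> 1"
  shows "y powr q * b powr (1 - q) \<le> q * y + (1 - q) * b"
proof (cases "y = 0")
  case True then show ?thesis using assms by simp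
next
  case False
  then show ?thesis using Youngs_inequality_0[of q "1 - q" y b] assms by simp
qed

lemma dirB:
  fixes f :: "'a::banach \<Rightarrow> ereal" and xbar :: 'a and q :: real
  assumes proper: "proper_ext f" and conv: "convex_ext f" and lsc: "lsc_ext f"
    and xbar: "xbar \<in> sublevel0 f"
    and q: "0 < q" "q \<le> 1"
    and noti: "\<not> (\<exists>\<tau>>0. \<exists>U. open U \<and> xbar \<in> U \<and>
              (\<forall>x\<in>U. ereal (\<tau> * infdist x (sublevel0 f)) \<le> fplus_pow f q x))"
    and eps: "0 < \<epsilon>" and del: "0 < \<delta>"
  shows "\<exists>z. 0 < f z \<and> dist z xbar < \<delta> \<and> slope_ii f q z \<le> ereal \<epsilon> \<and> slope_iii f q z \<le> ereal \<epsilon>"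
proof -
  define S where "S = sublevel0 f"
  have hf: "f y = ereal (real_of_ereal (f y))" if "f y \<noteq> \<infinity>" for y
    using proper that unfolding proper_ext_def by (cases "f y") auto
  have Sclosed: "closed S" unfolding S_def sublevel0_def using closed_sublevel[OF lsc] by simp
  have Sne: "S \<noteq> {}" using xbar S_def by blast
  have notS: "y \<notin> S \<longleftrightarrow> 0 < f y" for y unfolding S_def sublevel0_def by auto
  define \<eta> where "\<eta> = \<epsilon> / 2 * min q (q powr q)"
  have qq: "0 < q powr q" using q by simp
  have eta: "0 < \<eta>" unfolding \<eta>_def using eps q qq by simp
  have eta1: "2 * \<eta> / q \<le> \<epsilon>" unfolding \<eta>_def using eps q by (simp add: field_simps)
  have eta2: "2 * \<eta> / q powr q \<le> \<epsilon>" unfolding \<eta>_def using eps q qq by (simp add: field_simps)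
  define \<rho> where "\<rho> = \<delta> / 2"
  have rho: "0 < \<rho>" using del \<rho>_def by simp
  obtain x where xb: "x \<in> ball xbar \<rho>" and xn: "\<not> ereal (\<eta> * infdist x S) \<le> fplus_pow f q x"
    using noti eta rho unfolding S_def by (metis open_ball centre_in_ball)
  define d where "d = infdist x S"
  have fxfin: "f x \<noteq> \<infinity>" using xn unfolding fplus_pow_def by auto
  define a where "a = real_of_ereal (f x)"
  have fxa: "f x = ereal a" using hf[OF fxfin] a_def by simp
  have lt: "max a 0 powr q < \<eta> * d" using xn fxfin unfolding fplus_pow_def a_def d_def by simp
  have dpos: "0 < d" using lt eta by (smt (verit) powr_ge_zero mult_nonneg_nonneg infdist_nonneg d_def zero_less_mult_iff)
  have "x \<notin> S" using dpos d_def by auto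
  then have apos: "0 < a" using notS fxa by simp
  have aq: "a powr q < \<eta> * d" using lt apos by simp
  have aqpos: "0 < a powr q" using apos by simp
  have dle: "d \<le> dist x xbar" unfolding d_def using xbar S_def by (simp add: infdist_le)
  define M where "M = a powr q + 1"
  define G where "G y = min M (if f y = \<infinity> then M else max (real_of_ereal (f y)) 0 powr q)" for y
  have Gnn: "0 \<le> G y" for y unfolding G_def M_def using aqpos by simp
  have Gx: "G x = a powr q" unfolding G_def M_def using fxa apos by simp
  have Gclosed: "closed {y. G y \<le> c}" for c
  proof (cases "M \<le> c")
    case True
    then have "{y. G y \<le> c} = UNIV" unfolding G_def by auto
    then show ?thesis by simp
  next
    case False
    show ?thesis
    proof (cases "c < 0")
      case True
      then have "{y. G y \<le> c} = {}" using Gnn by (auto simp: not_le) (meson Gnn le_less_trans not_le)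
      then show ?thesis by simp
    next
      case c0: False
      have "{y. G y \<le> c} = {y. f y \<le> ereal (c powr (1/q))}"
      proof (intro set_eqI iffI; simp)
        fix y assume Gy: "G y \<le> c"
        have "f y \<noteq> \<infinity>" using Gy False unfolding G_def by auto
        then have "max (real_of_ereal (f y)) 0 powr q \<le> c" using Gy False unfolding G_def by auto
        then have "max (real_of_ereal (f y)) 0 \<le> c powr (1/q)" using powr_le_iff_root c0 q by simp
        then show "f y \<le> ereal (c powr (1/q))" using hf[OF \<open>f y \<noteq> \<infinity>\<close>] by (metis ereal_less_eq(3) max.boundedE)
      next
        fix y assume fy: "f y \<le> ereal (c powr (1/q))"
        then have fin: "f y \<noteq> \<infinity>" by auto
        have "real_of_ereal (f y) \<le> c powr (1/q)" using fy hf[OF fin] by (metis ereal_less_eq(3))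
        then have "max (real_of_ereal (f y)) 0 \<le> c powr (1/q)" by simp
        then have "max (real_of_ereal (f y)) 0 powr q \<le> c" using powr_le_iff_root c0 q by simp
        then show "G y \<le> c" unfolding G_def using fin by simp
      qed
      then show ?thesis using closed_sublevel[OF lsc] by simp
    qed
  qed
  define k where "k = 2 * a powr q / d"
  have kpos: "0 < k" unfolding k_def using aqpos dpos by simp
  obtain z where z1: "G z + k * dist z x \<le> G x" and z2: "\<And>y. G z \<le> G y + k * dist y z"
    using ekeland[of G k x, OF Gclosed Gnn kpos] by blast
  have Gz: "G z \<le> a powr q" using z1 Gx kpos by (smt (verit) zero_le_dist mult_nonneg_nonneg)
  have fzfin: "f z \<noteq> \<infinity>" using Gz unfolding G_def M_def by auto
  define b where "b = real_of_ereal (f z)"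
  have fzb: "f z = ereal b" using hf[OF fzfin] b_def by simp
  have "k * dist z x \<le> a powr q" using z1 Gx Gnn[of z] by simp
  then have dzx: "dist z x \<le> d / 2" using dpos aqpos unfolding k_def by (simp add: field_simps)
  define u where "u = infdist z S"
  have ud: "d / 2 \<le> u" using infdist_triangle[of x S z] dzx unfolding u_def d_def by (simp add: dist_commute)
  then have "z \<notin> S" using dpos u_def by auto
  then have bpos: "0 < b" using notS fzb by simp
  have Gzb: "G z = min M (b powr q)" unfolding G_def using fzb bpos by simp
  have bq: "b powr q \<le> a powr q" using Gz Gzb M_def by simp
  have ba: "b \<le> a" using bq apos bpos q powr_le_cancel_iff[of _ b a] by (smt (verit) powr_less_mono2)
  have bGz: "b powr q = G z" using Gzb bq M_def by simp
  have distz: "dist z xbar < \<delta>"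
    using dist_triangle[of z xbar x] dzx dle xb rho unfolding \<rho>_def by (simp add: dist_commute)
  define L where "L = k / q * b powr (1 - q)"
  have Lnn: "0 \<le> L" unfolding L_def using kpos q by simp
  have low: "f z - ereal (L * norm (y - z)) \<le> f y" for y
  proof (cases "f y = \<infinity>")
    case True then show ?thesis by simp
  next
    case False
    define c where "c = real_of_ereal (f y)"
    have fyc: "f y = ereal c" using hf[OF False] c_def by simp
    show ?thesis
    proof (cases "b \<le> c")
      case True
      have "b - L * norm (y - z) \<le> c" using True Lnn by (smt (verit) norm_ge_zero mult_nonneg_nonneg)
      then show ?thesis using fzb fyc by simp
    next
      case False
      define dd where "dd = b - c"
      have ddpos: "0 < dd" using False dd_def by simp
      define t where "t = min 1 (b / dd)"
      have t: "0 < t" "t \<le> 1" "t * dd \<le> b" using bpos ddpos unfolding t_def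
        by (auto simp: min_def field_simps)
      define zt where "zt = t *\<^sub>R y + (1 - t) *\<^sub>R z"
      have "f zt \<le> ereal t * f y + ereal (1 - t) * f z"
        using conv t unfolding convex_ext_def zt_def by simp
      also have "\<dots> = ereal (t * c + (1 - t) * b)" using fyc fzb by simp
      also have "t * c + (1 - t) * b = b - t * dd" unfolding dd_def by (simp add: algebra_simps)
      finally have fzt: "f zt \<le> ereal (b - t * dd)" .
      then have fztfin: "f zt \<noteq> \<infinity>" by auto
      have "real_of_ereal (f zt) \<le> b - t * dd" using fzt hf[OF fztfin] by (metis ereal_less_eq(3))
      then have "max (real_of_ereal (f zt)) 0 \<le> b - t * dd" using t by simp
      then have "max (real_of_ereal (f zt)) 0 powr q \<le> (b - t * dd) powr q" using q by (intro powr_mono2) auto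
      then have Gzt: "G zt \<le> (b - t * dd) powr q" unfolding G_def using fztfin by simp
      have dzt: "dist zt z = t * norm (y - z)"
      proof -
        have "zt - z = t *\<^sub>R (y - z)" unfolding zt_def by (simp add: algebra_simps)
        then show ?thesis using t by (simp add: dist_norm)
      qed
      have E: "b powr q \<le> (b - t * dd) powr q + k * (t * norm (y - z))"
        using z2[of zt] Gzt bGz dzt by simp
      have B1: "b powr q * b powr (1 - q) = b" using bpos by (simp add: powr_add[symmetric])
      have "b = b powr q * b powr (1 - q)" using B1 by simp
      also have "\<dots> \<le> ((b - t * dd) powr q + k * (t * norm (y - z))) * b powr (1 - q)"
        using E by (intro mult_right_mono) auto
      also have "\<dots> = (b - t * dd) powr q * b powr (1 - q) + k * (t * norm (y - z)) * b powr (1 - q)"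
        by (simp add: algebra_simps)
      also have "\<dots> \<le> q * (b - t * dd) + (1 - q) * b + k * (t * norm (y - z)) * b powr (1 - q)"
        using tangent_powr[of "b - t * dd" b q] t bpos q by simp
      finally have "q * (t * dd) \<le> k * (t * norm (y - z)) * b powr (1 - q)" by (simp add: algebra_simps)
      then have "t * (q * dd) \<le> t * (k * norm (y - z) * b powr (1 - q))" by (simp add: algebra_simps)
      then have "q * dd \<le> k * norm (y - z) * b powr (1 - q)" using t by simp
      then have "dd \<le> L * norm (y - z)" unfolding L_def using q by (simp add: field_simps)
      then have "b - L * norm (y - z) \<le> c" unfolding dd_def by simp
      then show ?thesis using fzb fyc by simp
    qed
  qed
  obtain s where s: "s \<in> subdiff f z" "norm s \<le> L"
    using subgrad_exists[OF proper conv fzfin Lnn low] by blast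
  have D1: "dist0_subdiff f z \<le> ereal (norm s)" unfolding dist0_subdiff_def using s(1) by (rule INF_lower)
  have D0: "0 \<le> dist0_subdiff f z" unfolding dist0_subdiff_def by (rule INF_greatest) simp
  define D where "D = real_of_ereal (dist0_subdiff f z)"
  have Dfin: "dist0_subdiff f z = ereal D" using D0 D1 unfolding D_def by (cases "dist0_subdiff f z") auto
  have D0r: "0 \<le> D" and DL: "D \<le> L" using D0 D1 s(2) Dfin by auto
  have LA: "L \<le> 2 * a / (q * d)"
  proof -
    have "b powr (1 - q) \<le> a powr (1 - q)" using ba bpos q by (intro powr_mono2) auto
    then have "L \<le> k / q * a powr (1 - q)" unfolding L_def using kpos q by (intro mult_left_mono) auto
    also have "k / q * a powr (1 - q) = 2 * (a powr q * a powr (1 - q)) / (q * d)" unfolding k_def by (simp add: mult.commute mult.left_commute)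
    also have "a powr q * a powr (1 - q) = a" using apos by (simp add: powr_add[symmetric])
    finally show ?thesis .
  qed
  have "slope_ii f q z = ereal (b powr (q - 1) * D)" unfolding slope_ii_def using fzfin fzb Dfin by simp
  also have "b powr (q - 1) * D \<le> b powr (q - 1) * L" using DL by (intro mult_left_mono) auto
  also have "b powr (q - 1) * L = k / q"
  proof -
    have "b powr (q - 1) * b powr (1 - q) = 1" using bpos by (simp add: powr_add[symmetric])
    then show ?thesis unfolding L_def by (simp add: field_simps)
  qed
  also have "k / q = 2 * a powr q / d / q" unfolding k_def by simp
  also have "\<dots> \<le> 2 * \<eta> / q" using aq dpos q by (simp add: field_simps)
  also have "\<dots> \<le> \<epsilon>" using eta1 .
  finally have ii: "slope_ii f q z \<le> ereal \<epsilon>" by simp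
  have "slope_iii f q z = ereal (u powr (q - 1) * D powr q)"
    unfolding slope_iii_def epow_def using Dfin u_def S_def by simp
  also have "u powr (q - 1) * D powr q \<le> (d/2) powr (q - 1) * (2 * a / (q * d)) powr q"
  proof (rule mult_mono)
    show "u powr (q - 1) \<le> (d/2) powr (q - 1)" using ud dpos q by (intro powr_mono2') auto
    show "D powr q \<le> (2 * a / (q * d)) powr q" using D0r DL LA q by (intro powr_mono2) auto
  qed auto
  also have "(d/2) powr (q - 1) * (2 * a / (q * d)) powr q = 2 * (a powr q / q powr q) / d"
  proof -
    have e1: "2 * a / (q * d) = (a / q) / (d / 2)" by (simp add: field_simps)
    have e2: "(d/2) powr (q - 1) = (d/2) powr q / (d/2)" using dpos by (simp add: powr_diff)
    have e3: "((a / q) / (d / 2)) powr q = (a / q) powr q / (d/2) powr q" by (rule powr_divide)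
    have e4: "(a / q) powr q = a powr q / q powr q" by (rule powr_divide)
    have "(d/2) powr q > 0" using dpos by simp
    then show ?thesis unfolding e1 e2 e3 e4 using dpos by (simp add: field_simps)
  qed
  also have "\<dots> \<le> 2 * \<eta> / q powr q" using aq dpos qq by (simp add: field_simps)
  also have "\<dots> \<le> \<epsilon>" using eta2 .
  finally have iii: "slope_iii f q z \<le> ereal \<epsilon>" by simp
  have "0 < f z" using fzb bpos by simp
  then show ?thesis using ii iii distz by blast
qed

lemma subgrad_dist:
  fixes f :: "'a::real_normed_vector \<Rightarrow> ereal"
  assumes s: "s \<in> subdiff f x" and fx: "f x = ereal a" and Sne: "sublevel0 f \<noteq> {}"
  shows "a \<le> norm s * infdist x (sublevel0 f)"
proof -
  have each: "a \<le> norm s * dist x w" if w: "w \<in> sublevel0 f" for w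
  proof -
    have "f x + ereal (blinfun_apply s (w - x)) \<le> f w" using s fx unfolding subdiff_def by auto
    also have "f w \<le> 0" using w unfolding sublevel0_def by simp
    finally have "a + blinfun_apply s (w - x) \<le> 0" using fx by (simp add: zero_ereal_def)
    moreover have "- blinfun_apply s (w - x) = blinfun_apply s (x - w)" by (simp add: blinfun.diff_right)
    moreover have "blinfun_apply s (x - w) \<le> norm s * norm (x - w)"
      using norm_blinfun[of s "x - w"] by simp
    ultimately show ?thesis by (simp add: dist_norm)
  qed
  show ?thesis
  proof (cases "norm s = 0")
    case True
    then have "a \<le> 0" using each[of _] Sne by auto
    then show ?thesis using True by simp
  next
    case False
    then have ns: "norm s > 0" by simp
    have "a / norm s \<le> infdist x (sublevel0 f)"
      unfolding infdist_notempty[OF Sne]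
    proof (rule cINF_greatest[OF Sne])
      fix w assume "w \<in> sublevel0 f"
      then show "a / norm s \<le> dist x w" using each ns by (simp add: field_simps mult.commute)
    qed
    then show ?thesis using ns by (simp add: field_simps mult.commute)
  qed
qed

lemma pointA:
  fixes f :: "'a::real_normed_vector \<Rightarrow> ereal" and xbar :: 'a and q :: real
  assumes proper: "proper_ext f" and lsc: "lsc_ext f"
    and xbar: "xbar \<in> sublevel0 f" and q: "0 < q" "q \<le> 1" and tau: "0 < \<tau>"
    and hx: "ereal (\<tau> * infdist x (sublevel0 f)) \<le> fplus_pow f q x" and fx: "0 < f x"
  shows "ereal \<tau> \<le> slope_ii f q x \<and> ereal \<tau> \<le> slope_iii f q x"
proof -
  define S where "S = sublevel0 f"
  have Sclosed: "closed S" unfolding S_def sublevel0_def using closed_sublevel[OF lsc] by simp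
  have Sne: "S \<noteq> {}" using xbar S_def by blast
  have "x \<notin> S" using fx unfolding S_def sublevel0_def by auto
  define d where "d = infdist x S"
  have dpos: "0 < d" unfolding d_def using infdist_pos_not_in_closed[OF Sclosed Sne \<open>x \<notin> S\<close>] .
  show ?thesis
  proof (cases "f x = \<infinity>")
    case True
    then have "subdiff f x = {}" unfolding subdiff_def by simp
    then have "dist0_subdiff f x = \<infinity>" unfolding dist0_subdiff_def by (simp add: top_ereal_def)
    then show ?thesis using True dpos unfolding slope_ii_def slope_iii_def epow_def S_def d_def by simp
  next
    case False
    define a where "a = real_of_ereal (f x)"
    have fxa: "f x = ereal a" using proper False unfolding a_def proper_ext_def by (cases "f x") auto
    have apos: "0 < a" using fx fxa by simp
    have td: "\<tau> * d \<le> a powr q" using hx fxa apos unfolding fplus_pow_def d_def S_def by simp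
    have key: "a \<le> norm s * d" if "s \<in> subdiff f x" for s
      using subgrad_dist[OF that fxa] Sne unfolding d_def S_def by simp
    have ii_s: "\<tau> / a powr (q - 1) \<le> norm s" if "s \<in> subdiff f x" for s
    proof -
      have "\<tau> * a \<le> \<tau> * (norm s * d)" using key[OF that] tau by simp
      also have "\<dots> = norm s * (\<tau> * d)" by simp
      also have "\<dots> \<le> norm s * a powr q" using td by (intro mult_left_mono) auto
      also have "a powr q = a powr (q - 1) * a"
      proof -
        have "a powr (q - 1) * a powr 1 = a powr (q - 1 + 1)" by (rule powr_add[symmetric])
        then show ?thesis using apos by simp
      qed
      finally have "\<tau> * a \<le> (norm s * a powr (q - 1)) * a" by (simp add: mult.assoc)
      then have "\<tau> \<le> norm s * a powr (q - 1)" using apos by simp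
      then show ?thesis using apos by (simp add: field_simps)
    qed
    have D1: "ereal (\<tau> / a powr (q - 1)) \<le> dist0_subdiff f x"
      unfolding dist0_subdiff_def using ii_s by (intro INF_greatest) simp
    have "ereal \<tau> = ereal (a powr (q - 1)) * ereal (\<tau> / a powr (q - 1))" using apos by simp
    also have "\<dots> \<le> ereal (a powr (q - 1)) * dist0_subdiff f x" using D1 by (intro ereal_mult_left_mono) auto
    finally have ii: "ereal \<tau> \<le> slope_ii f q x" unfolding slope_ii_def using False fxa by simp
    define m where "m = (\<tau> * d powr (1 - q)) powr (1/q)"
    have iii_s: "m \<le> norm s" if "s \<in> subdiff f x" for s
    proof -
      have "a powr q \<le> (norm s * d) powr q"
        using key[OF that] apos q by (intro powr_mono2) auto
      then have "\<tau> * d \<le> (norm s * d) powr q" using td by linarith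
      also have "\<dots> = norm s powr q * d powr q" using dpos by (simp add: powr_mult)
      finally have "\<tau> * d \<le> norm s powr q * d powr q" .
      moreover have "d = d powr q * d powr (1 - q)" using dpos by (simp add: powr_add[symmetric])
      ultimately have "\<tau> * d powr (1 - q) * d powr q \<le> norm s powr q * d powr q" by (simp add: algebra_simps)
      then have "\<tau> * d powr (1 - q) \<le> norm s powr q" using dpos by simp
      then have "(\<tau> * d powr (1 - q)) powr (1/q) \<le> (norm s powr q) powr (1/q)"
        using tau q by (intro powr_mono2) auto
      then show ?thesis unfolding m_def using q by (simp add: powr_powr)
    qed
    have iii: "ereal \<tau> \<le> slope_iii f q x"
    proof (cases "subdiff f x = {}")
      case True
      then have "dist0_subdiff f x = \<infinity>" unfolding dist0_subdiff_def by (simp add: top_ereal_def)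
      then show ?thesis using dpos unfolding slope_iii_def epow_def S_def d_def by simp
    next
      case ne: False
      then obtain s0 where s0: "s0 \<in> subdiff f x" by blast
      have Dm: "ereal m \<le> dist0_subdiff f x"
        unfolding dist0_subdiff_def using iii_s by (intro INF_greatest) simp
      have Du: "dist0_subdiff f x \<le> ereal (norm s0)" unfolding dist0_subdiff_def using s0 by (rule INF_lower)
      have m0: "0 \<le> m" unfolding m_def by simp
      define D where "D = real_of_ereal (dist0_subdiff f x)"
      have Dfin: "dist0_subdiff f x = ereal D" using Dm Du m0 unfolding D_def by (cases "dist0_subdiff f x") auto
      have mD: "m \<le> D" using Dm Dfin by simp
      have "m powr q = \<tau> * d powr (1 - q)" unfolding m_def using tau dpos q by (simp add: powr_powr)
      moreover have "m powr q \<le> D powr q" using mD m0 q by (intro powr_mono2) auto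
      ultimately have "\<tau> * d powr (1 - q) \<le> D powr q" by simp
      then have "d powr (q - 1) * (\<tau> * d powr (1 - q)) \<le> d powr (q - 1) * D powr q"
        by (intro mult_left_mono) auto
      moreover have "d powr (q - 1) * (\<tau> * d powr (1 - q)) = \<tau>"
      proof -
        have "d powr (q - 1) * d powr (1 - q) = 1" using dpos by (simp add: powr_add[symmetric])
        then show ?thesis by (simp add: algebra_simps)
      qed
      ultimately have "\<tau> \<le> d powr (q - 1) * D powr q" by simp
      then show ?thesis unfolding slope_iii_def epow_def using Dfin S_def d_def by simp
    qed
    show ?thesis using ii iii by blast
  qed
qed

lemma liminf_nonpos:
  fixes f :: "'a::metric_space \<Rightarrow> ereal" and h :: "'a \<Rightarrow> ereal"
  assumes fx: "f xbar \<le> 0"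
    and app: "\<And>\<epsilon> \<delta>. 0 < \<epsilon> \<Longrightarrow> 0 < \<delta> \<Longrightarrow> \<exists>z. 0 < f z \<and> dist z xbar < \<delta> \<and> h z \<le> ereal \<epsilon>"
  shows "\<not> 0 < Liminf (at xbar within {x. 0 < f x}) h"
proof
  assume pos: "0 < Liminf (at xbar within {x. 0 < f x}) h"
  obtain y where y: "0 < y" "y < Liminf (at xbar within {x. 0 < f x}) h" using dense[OF pos] by blast
  define y' where "y' = min y 1"
  have y': "0 < y'" "y' < Liminf (at xbar within {x. 0 < f x}) h" "y' \<le> 1"
    using y unfolding y'_def by (auto simp: min_def)
  have "eventually (\<lambda>x. y' < h x) (at xbar within {x. 0 < f x})" using y'(2) by (rule less_LiminfD)
  then obtain \<delta> where d: "\<delta> > 0" and dP: "\<And>x. x \<in> {x. 0 < f x} \<Longrightarrow> x \<noteq> xbar \<Longrightarrow> dist x xbar < \<delta> \<Longrightarrow> y' < h x"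
    unfolding eventually_at by blast
  define r where "r = real_of_ereal y'"
  have yr: "y' = ereal r" and rpos: "0 < r" using y' unfolding r_def by (cases y'; auto)+
  obtain z where z: "0 < f z" "dist z xbar < \<delta>" "h z \<le> ereal (r/2)" using app[of "r/2" \<delta>] rpos d by auto
  have "z \<noteq> xbar" using z(1) fx by auto
  then have "y' < h z" using dP z by simp
  then have "ereal r < ereal (r/2)" using z(3) yr by (metis less_le_trans)
  then show False using rpos by simp
qed

theorem corollary3p35:
  fixes f :: "'a::banach \<Rightarrow> ereal" and xbar :: 'a and q :: real
  assumes "proper_ext f" and "convex_ext f" and "lsc_ext f"
    and "xbar \<in> sublevel0 f"
    and "0 < q" and "q \<le> 1"
  shows "((\<exists>\<tau>>0. \<exists>U. open U \<and> xbar \<in> U \<and>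
              (\<forall>x\<in>U. ereal (\<tau> * infdist x (sublevel0 f)) \<le> fplus_pow f q x))
          \<longleftrightarrow> 0 < Liminf (at xbar within {x. 0 < f x}) (slope_ii f q))
       \<and> (0 < Liminf (at xbar within {x. 0 < f x}) (slope_ii f q)
          \<longleftrightarrow> 0 < Liminf (at xbar within {x. 0 < f x}) (slope_iii f q))"
proof -
  let ?I = "\<exists>\<tau>>0. \<exists>U. open U \<and> xbar \<in> U \<and>
              (\<forall>x\<in>U. ereal (\<tau> * infdist x (sublevel0 f)) \<le> fplus_pow f q x)"
  let ?F = "at xbar within {x. 0 < f x}"
  have fx: "f xbar \<le> 0" using assms(4) unfolding sublevel0_def by simp
  have A: "0 < Liminf ?F (slope_ii f q) \<and> 0 < Liminf ?F (slope_iii f q)" if I: ?I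
  proof -
    obtain \<tau> U where tau: "\<tau> > 0" and U: "open U" "xbar \<in> U"
      and bnd: "\<forall>x\<in>U. ereal (\<tau> * infdist x (sublevel0 f)) \<le> fplus_pow f q x" using I by blast
    have ev: "eventually (\<lambda>x. x \<in> U \<and> x \<in> {x. 0 < f x}) ?F"
      unfolding eventually_at_topological using U by blast
    have "eventually (\<lambda>x. ereal \<tau> \<le> slope_ii f q x \<and> ereal \<tau> \<le> slope_iii f q x) ?F"
      using ev by eventually_elim (use pointA[OF assms(1,3,4,5,6) tau] bnd in auto)
    then have "eventually (\<lambda>x. ereal \<tau> \<le> slope_ii f q x) ?F" "eventually (\<lambda>x. ereal \<tau> \<le> slope_iii f q x) ?F"
      by (auto elim: eventually_mono)
    then have "ereal \<tau> \<le> Liminf ?F (slope_ii f q)" "ereal \<tau> \<le> Liminf ?F (slope_iii f q)"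
      by (auto intro: Liminf_bounded)
    then show ?thesis using tau by (meson ereal_less(2) less_le_trans)
  qed
  have B: "\<not> 0 < Liminf ?F (slope_ii f q) \<and> \<not> 0 < Liminf ?F (slope_iii f q)" if nI: "\<not> ?I"
  proof -
    have app: "\<exists>z. 0 < f z \<and> dist z xbar < \<delta> \<and> slope_ii f q z \<le> ereal \<epsilon> \<and> slope_iii f q z \<le> ereal \<epsilon>"
      if "0 < \<epsilon>" "0 < \<delta>" for \<epsilon> \<delta>
      using dirB[OF assms nI that] .
    have "\<not> 0 < Liminf ?F (slope_ii f q)"
      by (rule liminf_nonpos[of f xbar, OF fx]) (use app in blast)
    moreover have "\<not> 0 < Liminf ?F (slope_iii f q)"
      by (rule liminf_nonpos[of f xbar, OF fx]) (use app in blast)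
    ultimately show ?thesis by blast
  qed
  show ?thesis using A B by blast
qed

end
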